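(* In the notation below, suppose $0<d_n\le1$ for all $n$ and $d_n\ge C|n|^{-\zeta}$ for all $n\neq0$, for some constants $C>0$ and $\zeta<\tfrac12$. Then for every sufficiently small $C_0>0$ there exists $\gamma'>0$ such that for all integers $s\ge1$, $$A(s):=\Big(\frac{15}{16}+\frac1{16}\sup_{|k|\ge t_sC_0/\|a\|_\infty}|\hat r(k)|^2\Big)^{1/2}\le\exp\!\big(-\gamma'|s|^{-2\zeta}\big),$$ where $t_s=\min(d_{2s-1},d_{2s})$.
   Context: $r:\mathbb R\to[0,\infty)$ is bounded, measurable, compactly supported, with $\int r=1$; $\hat r(k)=\int_{\mathbb R}e^{-2\pi ikx}r(x)\,dx$. $(a_n)_{n\in\mathbb Z}$ is a bounded real sequence with $a_n\ge\delta>0$ and $\|a\|_\infty=\sup_n a_n$. *)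

theory Defs
  imports "HOL-Analysis.Analysis"
begin

definition fourier_hat :: "(real \<Rightarrow> real) \<Rightarrow> real \<Rightarrow> complex" where
  "fourier_hat r k = (LINT x|lborel. cis (- 2 * pi * k * x) * complex_of_real (r x))"

definition sup_norm_seq :: "(int \<Rightarrow> real) \<Rightarrow> real" where
  "sup_norm_seq a = (SUP n. a n)"

definition A_quant :: "(real \<Rightarrow> real) \<Rightarrow> (int \<Rightarrow> real) \<Rightarrow> (int \<Rightarrow> real) \<Rightarrow> real \<Rightarrow> int \<Rightarrow> real" where
  "A_quant r a d C0 s =
     (let T = min (d (2 * s - 1)) (d (2 * s)) * C0 / sup_norm_seq a in
      sqrt (15/16 + 1/16 * Sup ((\<lambda>k. (cmod (fourier_hat r k))^2) ` {k. \<bar>k\<bar> \<ge> T})))"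

end

theory Submission
  imports Defs
begin

lemma sin_half: fixes x :: real assumes "0 \<le> x" "x \<le> 1" shows "x/2 \<le> sin x"
proof -
  have pi3: "1 \<le> pi/3" using pi_gt3 by simp
  have c: "\<And>u::real. 0 \<le> u \<Longrightarrow> u \<le> x \<Longrightarrow> 1/2 \<le> cos u"
  proof -
    fix u :: real assume u: "0 \<le> u" "u \<le> x"
    have "cos (pi/3) \<le> cos u" using u assms pi3 by (intro cos_monotone_0_pi_le) auto
    then show "1/2 \<le> cos u" by (simp add: cos_60)
  qed
  let ?f = "\<lambda>x. sin x - x/2"
  have "\<And>u::real. \<lbrakk>0 \<le> u; u \<le> x\<rbrakk> \<Longrightarrow> (?f has_real_derivative cos u - 1/2) (at u)"
    by (auto intro!: derivative_eq_intros)
  then have "?f x \<ge> ?f 0"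
    using c by (intro DERIV_nonneg_imp_nondecreasing[OF assms(1)]) force
  then show ?thesis by simp
qed

lemma cos_quad: fixes x :: real assumes "0 \<le> x" "x \<le> 1" shows "cos x \<le> 1 - x^2/4"
proof -
  let ?f = "\<lambda>x. 1 - x^2/4 - cos x"
  have "\<And>u::real. \<lbrakk>0 \<le> u; u \<le> x\<rbrakk> \<Longrightarrow> (?f has_real_derivative sin u - u/2) (at u)"
    by (auto intro!: derivative_eq_intros simp: power2_eq_square)
  then have "?f x \<ge> ?f 0"
    using sin_half assms by (intro DERIV_nonneg_imp_nondecreasing[OF assms(1)]) force
  then show ?thesis by simp
qed

lemma cos_reduce: "\<exists>n::int. \<bar>t - 2*pi*n\<bar> \<le> pi \<and> cos (t - 2*pi*n) = cos t"
proof -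
  define n where "n = round (t/(2*pi))"
  have "\<bar>t/(2*pi) - n\<bar> \<le> 1/2" unfolding n_def using of_int_round_abs_le[of "t/(2*pi)"] by (simp add: abs_minus_commute)
  hence "\<bar>t - 2*pi*n\<bar> \<le> pi"
  proof -
    have "t - 2*pi*n = 2*pi*(t/(2*pi) - n)" by (simp add: field_simps)
    thus ?thesis using \<open>\<bar>t/(2*pi) - n\<bar> \<le> 1/2\<close> by (simp add: abs_mult)
  qed
  moreover have "cos (t - 2*pi*n) = cos t"
    by (simp add: cos_diff sin_diff)
  ultimately show ?thesis by blast
qed

lemma fourier_key:
  fixes r :: "real \<Rightarrow> real" and B R k \<delta>0 :: real
  assumes meas: "r \<in> borel_measurable lborel" and nonneg: "\<And>x. r x \<ge> 0"
    and rB: "\<And>x. r x \<le> B" and rR: "\<And>x. \<bar>x\<bar> > R \<Longrightarrow> r x = 0"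
    and int1: "integral\<^sup>L lborel r = 1" and Bpos: "B > 0" and Rpos: "R \<ge> 0" and k0: "k \<noteq> 0"
    and d0: "0 < \<delta>0" "\<delta>0 \<le> 1"
  shows "(1 - cos \<delta>0) * (1 - B * (2*\<bar>k\<bar>*R + 2) * (\<delta>0/(pi*\<bar>k\<bar>))) \<le> 1 - cmod (fourier_hat r k)"
proof -
  have intr: "integrable lborel r" using int1 not_integrable_integral_eq by fastforce
  define F where "F x = cis (- 2 * pi * k * x) * complex_of_real (r x)" for x
  have i1: "integrable lborel (\<lambda>x. complex_of_real (r x))" using intr by simp
  have m1: "(\<lambda>x::real. cis (- 2 * pi * k * x)) \<in> borel_measurable lborel"
  proof -
    have "continuous_on UNIV (\<lambda>x::real. cis (- 2 * pi * k * x))"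
      by (intro continuous_intros)
    then show ?thesis unfolding measurable_lborel2 by (rule borel_measurable_continuous_onI)
  qed
  have m2: "(\<lambda>x. complex_of_real (r x)) \<in> borel_measurable lborel" using meas by simp
  have m: "F \<in> borel_measurable lborel" unfolding F_def using m1 m2 by (rule borel_measurable_times)
  have "AE x in lborel. norm (F x) \<le> norm (complex_of_real (r x))"
    by (simp add: F_def norm_mult)
  then have intf: "integrable lborel F" using Bochner_Integration.integrable_bound[OF i1 m] by blast
  define z where "z = fourier_hat r k"
  have zF: "z = integral\<^sup>L lborel F" unfolding z_def fourier_hat_def F_def ..
  obtain \<beta> where \<beta>: "cmod z = Re (cis \<beta> * z)"
  proof (cases "z = 0")
    case True then show ?thesis using that[of 0] by simp
  next
    case False
    have "cis (Arg (cnj z)) = cnj z / cmod z" using False by (simp add: cis_Arg sgn_div_norm divide_inverse scaleR_conv_of_real mult.commute)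
    hence "Re (cis (Arg (cnj z)) * z) = cmod z"
    proof -
      have "Re (cis (Arg (cnj z)) * z) = Re (cnj z * z) / cmod z"
        using \<open>cis (Arg (cnj z)) = cnj z / cmod z\<close> by (simp add: Re_divide_of_real)
      also have "Re (cnj z * z) = (cmod z)^2" using cmod_power2[of z] by (simp add: power2_eq_square)
      finally show ?thesis using False by (simp add: power2_eq_square)
    qed
    then show ?thesis using that by metis
  qed
  have bl: "bounded_linear (\<lambda>w. Re (cis \<beta> * w))"
    by (rule bounded_linear_compose[OF bounded_linear_Re bounded_linear_mult_right])
  have "cmod z = integral\<^sup>L lborel (\<lambda>x. Re (cis \<beta> * F x))"
    using \<beta> zF integral_bounded_linear[OF bl intf] by simp
  also have "\<dots> = integral\<^sup>L lborel (\<lambda>x. r x * cos (\<beta> - 2*pi*k*x))"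
    by (rule Bochner_Integration.integral_cong) (auto simp: F_def cis_mult cos_diff algebra_simps)
  finally have cz: "cmod z = integral\<^sup>L lborel (\<lambda>x. r x * cos (\<beta> - 2*pi*k*x))" .
  have intc: "integrable lborel (\<lambda>x. r x * cos (\<beta> - 2*pi*k*x))"
  proof -
    have e: "(\<lambda>x. Re (cis \<beta> * F x)) = (\<lambda>x. r x * cos (\<beta> - 2*pi*k*x))"
      by (auto simp: F_def cis_mult cos_diff algebra_simps)
    show ?thesis using integrable_bounded_linear[OF bl intf] unfolding e .
  qed
  define \<theta> where "\<theta> x = \<beta> - 2*pi*k*x" for x
  define \<eta> where "\<eta> = 1 - cos \<delta>0"
  define w where "w = \<delta>0/(2*pi*\<bar>k\<bar>)"
  define m where "m n = (\<beta> - 2*pi*real_of_int n)/(2*pi*k)" for n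
  define lo where "lo = (\<beta> - 2*pi*\<bar>k\<bar>*R - \<delta>0)/(2*pi)"
  define hi where "hi = (\<beta> + 2*pi*\<bar>k\<bar>*R + \<delta>0)/(2*pi)"
  define N where "N = {\<lceil>lo\<rceil>..\<lfloor>hi\<rfloor>}"
  define I where "I n = {m n - w .. m n + w}" for n
  have \<eta>0: "\<eta> \<ge> 0" unfolding \<eta>_def by simp
  have kpos: "\<bar>k\<bar> > 0" using k0 by simp
  have w0: "w > 0" unfolding w_def using d0 kpos by simp
  have finN: "finite N" unfolding N_def by simp
  have memI: "x \<in> I n \<longleftrightarrow> \<bar>\<theta> x - 2*pi*n\<bar> \<le> \<delta>0" for x n
  proof -
    have "\<theta> x - 2*pi*n = 2*pi*k*(m n - x)" unfolding \<theta>_def m_def using k0 by (simp add: field_simps)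
    hence "\<bar>\<theta> x - 2*pi*n\<bar> = 2*pi*\<bar>k\<bar>*\<bar>x - m n\<bar>" by (simp add: abs_mult abs_minus_commute)
    moreover have "x \<in> I n \<longleftrightarrow> \<bar>x - m n\<bar> \<le> w" unfolding I_def by auto
    moreover have "\<bar>x - m n\<bar> \<le> w \<longleftrightarrow> 2*pi*\<bar>k\<bar>*\<bar>x - m n\<bar> \<le> \<delta>0"
      unfolding w_def using kpos by (simp add: field_simps)
    ultimately show ?thesis by simp
  qed
  have memN: "n \<in> N" if "\<bar>x\<bar> \<le> R" "\<bar>\<theta> x - 2*pi*n\<bar> \<le> \<delta>0" for x n
  proof -
    have "\<bar>k*x\<bar> \<le> \<bar>k\<bar>*R" using that(1) by (simp add: abs_mult mult_left_mono)
    hence "\<bar>2*pi*k*x\<bar> \<le> 2*pi*\<bar>k\<bar>*R" by (simp add: abs_mult)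
    hence "\<beta> - 2*pi*\<bar>k\<bar>*R - \<delta>0 \<le> 2*pi*n" "2*pi*n \<le> \<beta> + 2*pi*\<bar>k\<bar>*R + \<delta>0"
    proof -
      assume h: "\<bar>2*pi*k*x\<bar> \<le> 2*pi*\<bar>k\<bar>*R"
      have "2*pi*k*x \<le> 2*pi*\<bar>k\<bar>*R" "-(2*pi*k*x) \<le> 2*pi*\<bar>k\<bar>*R" using abs_le_D1[OF h] abs_le_D2[OF h] by auto
      moreover have "\<beta> - 2*pi*k*x - 2*pi*n \<le> \<delta>0" "-(\<beta> - 2*pi*k*x - 2*pi*n) \<le> \<delta>0"
        using abs_le_D1[OF that(2)] abs_le_D2[OF that(2)] unfolding \<theta>_def by auto
      ultimately show "\<beta> - 2*pi*\<bar>k\<bar>*R - \<delta>0 \<le> 2*pi*n" "2*pi*n \<le> \<beta> + 2*pi*\<bar>k\<bar>*R + \<delta>0" by linarith+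
    qed
    hence "lo \<le> n" "n \<le> hi" unfolding lo_def hi_def
      by (simp_all add: pos_divide_le_eq pos_le_divide_eq mult.commute)
    thus ?thesis unfolding N_def by (simp add: ceiling_le le_floor_iff)
  qed
  have pw: "\<eta> * r x - \<eta> * B * (\<Sum>n\<in>N. indicator (I n) x) \<le> r x * (1 - cos (\<theta> x))" for x
  proof -
    have S0: "(\<Sum>n\<in>N. indicator (I n) x) \<ge> (0::real)" by (rule sum_nonneg) simp
    have c1: "cos (\<theta> x) \<le> 1" by simp
    consider (out) "\<bar>x\<bar> > R" | (inU) "\<exists>n\<in>N. x \<in> I n" | (good) "\<bar>x\<bar> \<le> R" "\<forall>n\<in>N. x \<notin> I n"
      by fastforce
    then show ?thesis
    proof cases
      case out
      then have "r x = 0" using rR by simp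
      then show ?thesis using S0 \<eta>0 Bpos by simp
    next
      case inU
      then obtain n where n: "n \<in> N" "x \<in> I n" by blast
      have "(1::real) \<le> (\<Sum>n\<in>N. indicator (I n) x)"
        using member_le_sum[of n N "\<lambda>n. indicator (I n) x :: real", OF n(1)] finN n(2) by simp
      hence "\<eta> * B * 1 \<le> \<eta> * B * (\<Sum>n\<in>N. indicator (I n) x)" using \<eta>0 Bpos
        by (intro mult_left_mono) auto
      moreover have "\<eta> * r x \<le> \<eta> * B" using rB \<eta>0 by (simp add: mult_left_mono)
      moreover have "0 \<le> r x * (1 - cos (\<theta> x))" using nonneg c1 by simp
      ultimately show ?thesis by linarith
    next
      case good
      obtain n :: int where n: "\<bar>\<theta> x - 2*pi*n\<bar> \<le> pi" "cos (\<theta> x - 2*pi*n) = cos (\<theta> x)"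
        using cos_reduce by blast
      have "\<not> \<bar>\<theta> x - 2*pi*n\<bar> \<le> \<delta>0"
      proof
        assume h: "\<bar>\<theta> x - 2*pi*n\<bar> \<le> \<delta>0"
        then have "n \<in> N" using memN good(1) by blast
        moreover have "x \<in> I n" using memI h by blast
        ultimately show False using good(2) by blast
      qed
      hence "cos \<bar>\<theta> x - 2*pi*n\<bar> \<le> cos \<delta>0"
        using n(1) d0 by (intro cos_monotone_0_pi_le) auto
      hence "cos (\<theta> x) \<le> cos \<delta>0" using n(2) by simp
      hence "\<eta> \<le> 1 - cos (\<theta> x)" unfolding \<eta>_def by simp
      hence "\<eta> * r x \<le> r x * (1 - cos (\<theta> x))" using nonneg[of x] mult_right_mono[of \<eta> "1 - cos (\<theta> x)" "r x"] by (simp add: mult.commute)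
      moreover have "0 \<le> \<eta> * B * (\<Sum>n\<in>N. indicator (I n) x)" using \<eta>0 Bpos S0 by simp
      ultimately show ?thesis by linarith
    qed
  qed
  have intI: "integrable lborel (indicator (I n) :: real \<Rightarrow> real)" for n
    unfolding I_def using w0 by (intro integrable_real_indicator) (auto simp: emeasure_lborel_Icc)
  have intS: "integrable lborel (\<lambda>x. \<Sum>n\<in>N. indicator (I n) x :: real)"
    using intI by (intro Bochner_Integration.integrable_sum) auto
  have intg: "integrable lborel (\<lambda>x. r x * cos (\<theta> x))" using intc unfolding \<theta>_def .
  have intL: "integrable lborel (\<lambda>x. \<eta> * r x - \<eta> * B * (\<Sum>n\<in>N. indicator (I n) x))"
    using intr intS by (intro Bochner_Integration.integrable_diff integrable_mult_right) auto
  have eqR: "(\<lambda>x. r x * (1 - cos (\<theta> x))) = (\<lambda>x. r x - r x * cos (\<theta> x))"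
    by (auto simp: algebra_simps)
  have intR: "integrable lborel (\<lambda>x. r x * (1 - cos (\<theta> x)))"
    unfolding eqR using intr intg by (rule Bochner_Integration.integrable_diff)
  have m2: "measure lborel (I n) = 2*w" for n
    unfolding I_def using w0 by simp
  have e1: "integral\<^sup>L lborel (\<lambda>x. \<eta> * r x - \<eta> * B * (\<Sum>n\<in>N. indicator (I n) x))
      = \<eta> * 1 - \<eta> * B * (\<Sum>n\<in>N. 2*w)"
    using intr intS intI int1
    by (simp add: Bochner_Integration.integral_diff integral_sum m2)
  have e2: "integral\<^sup>L lborel (\<lambda>x. \<eta> * r x - \<eta> * B * (\<Sum>n\<in>N. indicator (I n) x))
      \<le> integral\<^sup>L lborel (\<lambda>x. r x * (1 - cos (\<theta> x)))"
    by (rule Bochner_Integration.integral_mono[OF intL intR pw])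
  have e3: "integral\<^sup>L lborel (\<lambda>x. r x * (1 - cos (\<theta> x))) = 1 - cmod z"
    unfolding eqR using intr intg int1 cz unfolding \<theta>_def by (simp add: Bochner_Integration.integral_diff)
  have "\<eta> * 1 - \<eta> * B * (\<Sum>n\<in>N. 2*w) \<le> 1 - cmod z" using e1 e2 e3 by simp
  then have main: "\<eta> - \<eta> * B * (card N * (2*w)) \<le> 1 - cmod z" by simp
  have hl: "hi - lo = 2*\<bar>k\<bar>*R + \<delta>0/pi" unfolding hi_def lo_def by (simp add: field_simps)
  have "\<delta>0/pi \<le> 1" using d0 pi_gt3 by simp
  have cN: "real (card N) \<le> 2*\<bar>k\<bar>*R + 2"
  proof -
    have "real (card N) = real (nat (\<lfloor>hi\<rfloor> - \<lceil>lo\<rceil> + 1))" unfolding N_def by simp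
    also have "\<dots> \<le> max 0 (real_of_int (\<lfloor>hi\<rfloor> - \<lceil>lo\<rceil> + 1))" by simp
    also have "\<dots> \<le> 2*\<bar>k\<bar>*R + 2"
    proof -
      have a: "real_of_int \<lfloor>hi\<rfloor> \<le> hi" by simp
      have b: "lo \<le> real_of_int \<lceil>lo\<rceil>" by simp
      have c: "0 \<le> \<bar>k\<bar>*R" using Rpos by simp
      show ?thesis
        by (intro max.boundedI) (use a b c hl \<open>\<delta>0/pi \<le> 1\<close> in linarith)+
    qed
    finally show ?thesis .
  qed
  have w2: "2*w = \<delta>0/(pi*\<bar>k\<bar>)" unfolding w_def by simp
  have "card N * (2*w) \<le> (2*\<bar>k\<bar>*R + 2) * (\<delta>0/(pi*\<bar>k\<bar>))"
    unfolding w2 using cN d0 kpos by (intro mult_right_mono) auto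
  hence "\<eta> * B * (card N * (2*w)) \<le> \<eta> * B * ((2*\<bar>k\<bar>*R + 2) * (\<delta>0/(pi*\<bar>k\<bar>)))"
    using \<eta>0 Bpos by (intro mult_left_mono) auto
  with main show ?thesis unfolding z_def \<eta>_def by (simp add: algebra_simps)
qed

lemma fourier_bound:
  fixes r :: "real \<Rightarrow> real"
  assumes meas: "r \<in> borel_measurable lborel" and nonneg: "\<And>x. r x \<ge> 0"
    and r_bdd: "\<exists>B. \<forall>x. r x \<le> B" and r_supp: "\<exists>R. \<forall>x. \<bar>x\<bar> > R \<longrightarrow> r x = 0"
    and int1: "integral\<^sup>L lborel r = 1"
  shows "\<exists>\<kappa>>0. \<forall>k. k \<noteq> 0 \<longrightarrow> cmod (fourier_hat r k) \<le> 1 - \<kappa> * min (k^2) 1"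
proof -
  obtain B0 where B0: "\<forall>x. r x \<le> B0" using r_bdd by blast
  obtain R0 where R0: "\<forall>x. \<bar>x\<bar> > R0 \<longrightarrow> r x = 0" using r_supp by blast
  define B where "B = max B0 1"
  define R where "R = max R0 0"
  have Bpos: "B > 0" and rB: "\<And>x. r x \<le> B" using B0 unfolding B_def by (auto intro: max.coboundedI1)
  have Rpos: "R \<ge> 0" and rR: "\<And>x. \<bar>x\<bar> > R \<Longrightarrow> r x = 0" using R0 unfolding R_def by auto
  define c0 where "c0 = min 1 (1/(2*B*(2*R+2)))"
  have c0pos: "c0 > 0" unfolding c0_def using Bpos Rpos by simp
  have c0le: "c0 \<le> 1" unfolding c0_def by simp
  have c0B: "B*(2*R+2)*c0 \<le> 1/2"
  proof -
    have "c0 \<le> 1/(2*B*(2*R+2))" unfolding c0_def by simp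
    hence "B*(2*R+2)*c0 \<le> B*(2*R+2)*(1/(2*B*(2*R+2)))" using Bpos Rpos by (intro mult_left_mono) auto
    also have "\<dots> = 1/2"
    proof -
      have "B*(2*R+2) > 0" using Bpos Rpos by simp
      then show ?thesis by (simp add: field_simps)
    qed
    finally show ?thesis .
  qed
  define \<kappa> where "\<kappa> = c0^2/8"
  have "\<kappa> > 0" unfolding \<kappa>_def using c0pos by simp
  moreover have "cmod (fourier_hat r k) \<le> 1 - \<kappa> * min (k^2) 1" if k0: "k \<noteq> 0" for k
  proof -
    define \<delta>0 where "\<delta>0 = c0 * min \<bar>k\<bar> 1"
    have kpos: "\<bar>k\<bar> > 0" using k0 by simp
    have d0: "0 < \<delta>0" "\<delta>0 \<le> 1" unfolding \<delta>0_def using c0pos c0le kpos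
      by (auto intro: mult_le_one)
    have key: "(1 - cos \<delta>0) * (1 - B * (2*\<bar>k\<bar>*R + 2) * (\<delta>0/(pi*\<bar>k\<bar>))) \<le> 1 - cmod (fourier_hat r k)"
      by (rule fourier_key[OF meas nonneg rB rR int1 Bpos Rpos k0 d0])
    have mk: "(2*\<bar>k\<bar>*R + 2) * (min \<bar>k\<bar> 1 / \<bar>k\<bar>) \<le> 2*R+2"
    proof (cases "\<bar>k\<bar> \<le> 1")
      case True
      then have "(2*\<bar>k\<bar>*R + 2) * (min \<bar>k\<bar> 1 / \<bar>k\<bar>) = 2*\<bar>k\<bar>*R + 2" using kpos by simp
      also have "\<dots> \<le> 2*R+2" using True Rpos mult_right_mono[of "\<bar>k\<bar>" 1 R] by simp
      finally show ?thesis .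
    next
      case False
      then have "(2*\<bar>k\<bar>*R + 2) * (min \<bar>k\<bar> 1 / \<bar>k\<bar>) = 2*R + 2/\<bar>k\<bar>" using kpos by (simp add: field_simps)
      also have "\<dots> \<le> 2*R+2" using False by (simp add: divide_le_eq)
      finally show ?thesis .
    qed
    have "B * (2*\<bar>k\<bar>*R + 2) * (\<delta>0/(pi*\<bar>k\<bar>)) \<le> B * (2*\<bar>k\<bar>*R + 2) * (\<delta>0/\<bar>k\<bar>)"
      using Bpos Rpos d0 kpos pi_gt3 by (intro mult_left_mono divide_left_mono) auto
    also have "\<dots> = B * c0 * ((2*\<bar>k\<bar>*R + 2) * (min \<bar>k\<bar> 1 / \<bar>k\<bar>))" unfolding \<delta>0_def by simp
    also have "\<dots> \<le> B * c0 * (2*R+2)" using mk Bpos c0pos by (intro mult_left_mono) auto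
    also have "\<dots> \<le> 1/2" using c0B by (simp add: algebra_simps)
    finally have f2: "1/2 \<le> 1 - B * (2*\<bar>k\<bar>*R + 2) * (\<delta>0/(pi*\<bar>k\<bar>))" by simp
    have f1: "\<delta>0^2/4 \<le> 1 - cos \<delta>0" using cos_quad[of \<delta>0] d0 by simp
    have "\<delta>0^2/4 * (1/2) \<le> (1 - cos \<delta>0) * (1 - B * (2*\<bar>k\<bar>*R + 2) * (\<delta>0/(pi*\<bar>k\<bar>)))"
      using f1 f2 by (intro mult_mono) auto
    moreover have "\<delta>0^2 = c0^2 * min (k^2) 1"
      unfolding \<delta>0_def by (auto simp: power_mult_distrib min_def abs_square_le_1)
    ultimately show ?thesis using key unfolding \<kappa>_def by linarith
  qed
  ultimately show ?thesis by blast
qed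

theorem lemma4p9:
  fixes r :: "real \<Rightarrow> real" and a d :: "int \<Rightarrow> real" and \<delta> C \<zeta> :: real
  assumes r_meas: "r \<in> borel_measurable lborel"
    and r_nonneg: "\<And>x. r x \<ge> 0"
    and r_bdd: "\<exists>B. \<forall>x. r x \<le> B"
    and r_supp: "\<exists>R. \<forall>x. \<bar>x\<bar> > R \<longrightarrow> r x = 0"
    and r_int: "integral\<^sup>L lborel r = 1"
    and a_bdd: "bdd_above (range a)"
    and \<delta>_pos: "\<delta> > 0"
    and a_ge: "\<And>n. a n \<ge> \<delta>"
    and d_pos: "\<And>n. 0 < d n" and d_le1: "\<And>n. d n \<le> 1"
    and C_pos: "C > 0" and \<zeta>_lt: "\<zeta> < 1/2"
    and d_lower: "\<And>n. n \<noteq> 0 \<Longrightarrow> d n \<ge> C * \<bar>real_of_int n\<bar> powr (- \<zeta>)"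
  shows "\<exists>c>0. \<forall>C0. 0 < C0 \<and> C0 < c \<longrightarrow>
           (\<exists>\<gamma>'>0. \<forall>s::int. s \<ge> 1 \<longrightarrow>
              A_quant r a d C0 s \<le> exp (- \<gamma>' * \<bar>real_of_int s\<bar> powr (- 2 * \<zeta>)))"
proof -
  obtain \<kappa> where \<kappa>0: "\<kappa> > 0" and \<kappa>b: "\<And>k. k \<noteq> 0 \<Longrightarrow> cmod (fourier_hat r k) \<le> 1 - \<kappa> * min (k^2) 1"
    using fourier_bound[OF r_meas r_nonneg r_bdd r_supp r_int] by blast
  define M where "M = sup_norm_seq a"
  have aM: "a 0 \<le> M" unfolding M_def sup_norm_seq_def using a_bdd by (rule cSUP_upper[OF UNIV_I])
  have Mpos: "\<delta> \<le> M" using aM a_ge[of 0] by simp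
  have \<zeta>0: "\<zeta> \<ge> 0"
  proof (rule ccontr)
    assume "\<not> \<zeta> \<ge> 0"
    then have e: "-\<zeta> > 0" by simp
    define y where "y = (1/C) powr (1/(-\<zeta>))"
    define n where "n = \<lceil>y\<rceil> + 1"
    have y0: "y \<ge> 0" unfolding y_def by simp
    have ny: "y < real_of_int n" unfolding n_def by linarith
    hence n0: "n \<noteq> 0" using y0 by auto
    have "y powr (-\<zeta>) < \<bar>real_of_int n\<bar> powr (-\<zeta>)" using ny y0 e by (intro powr_less_mono2) auto
    moreover have "y powr (-\<zeta>) = 1/C" unfolding y_def using e C_pos by (simp add: powr_powr)
    ultimately have "1 < C * \<bar>real_of_int n\<bar> powr (-\<zeta>)" using C_pos by (simp add: field_simps)
    then show False using d_lower[OF n0] d_le1[of n] by linarith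
  qed
  show ?thesis
  proof (rule exI[of _ \<delta>], intro conjI allI impI)
    show "\<delta> > 0" by (rule \<delta>_pos)
    fix C0 assume C0: "0 < C0 \<and> C0 < \<delta>"
    define \<gamma> where "\<gamma> = \<kappa>/32 * (C*C0/M)^2 * 2 powr (-2*\<zeta>)"
    show "\<exists>\<gamma>'>0. \<forall>s::int. s \<ge> 1 \<longrightarrow>
              A_quant r a d C0 s \<le> exp (- \<gamma>' * \<bar>real_of_int s\<bar> powr (- 2 * \<zeta>))"
    proof (intro exI[of _ \<gamma>] conjI allI impI)
      show "\<gamma> > 0" unfolding \<gamma>_def using \<kappa>0 C_pos C0 Mpos \<delta>_pos by simp
      fix s :: int assume s: "s \<ge> 1"
      define T where "T = min (d (2 * s - 1)) (d (2 * s)) * C0 / M"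
      define S where "S = (\<lambda>k. (cmod (fourier_hat r k))^2) ` {k. \<bar>k\<bar> \<ge> T}"
      have A_eq: "A_quant r a d C0 s = sqrt (15/16 + 1/16 * Sup S)"
        unfolding A_quant_def T_def M_def S_def Let_def by simp
      have Mp: "M > 0" using Mpos \<delta>_pos by simp
      have T0: "0 < T" unfolding T_def using d_pos C0 Mp by simp
      have "T \<le> 1 * C0 / M" unfolding T_def using d_le1 C0 Mp
        by (intro divide_right_mono mult_right_mono) (auto simp: min_le_iff_disj)
      also have "\<dots> \<le> C0 / \<delta>" using C0 Mpos \<delta>_pos by (simp add: frac_le)
      also have "\<dots> < 1" using C0 \<delta>_pos by simp
      finally have T1: "T < 1" .
      have Sb: "Sup S \<le> 1 - \<kappa> * T^2"
        unfolding S_def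
      proof (rule cSup_least)
        show "(\<lambda>k. (cmod (fourier_hat r k))^2) ` {k. \<bar>k\<bar> \<ge> T} \<noteq> {}" using T0 by (auto intro!: exI[of _ T])
        fix v assume "v \<in> (\<lambda>k. (cmod (fourier_hat r k))^2) ` {k. \<bar>k\<bar> \<ge> T}"
        then obtain k where k: "\<bar>k\<bar> \<ge> T" and v: "v = (cmod (fourier_hat r k))^2" by blast
        have k0: "k \<noteq> 0" using k T0 by auto
        have "T^2 \<le> k^2" using k T0 by (metis abs_le_square_iff abs_of_pos)
        moreover have "T^2 \<le> 1" using T0 T1 by (simp add: power_le_one)
        ultimately have "T^2 \<le> min (k^2) 1" by simp
        hence "\<kappa> * T^2 \<le> \<kappa> * min (k^2) 1" using \<kappa>0 by simp
        hence c: "cmod (fourier_hat r k) \<le> 1 - \<kappa> * T^2" using \<kappa>b[OF k0] by linarith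
        have c0: "0 \<le> cmod (fourier_hat r k)" by simp
        have "v \<le> (1 - \<kappa> * T^2)^2" unfolding v using c c0 by (intro power_mono) auto
        also have "\<dots> \<le> 1 - \<kappa> * T^2"
        proof -
          have "0 \<le> 1 - \<kappa> * T^2" using c c0 by linarith
          moreover have "1 - \<kappa> * T^2 \<le> 1" using \<kappa>0 by simp
          ultimately show ?thesis by (simp add: power2_eq_square mult_left_le_one_le)
        qed
        finally show "v \<le> 1 - \<kappa> * T^2" .
      qed
      define y where "y = \<kappa> * T^2 / 16"
      have y0: "0 \<le> y" unfolding y_def using \<kappa>0 by simp
      have "A_quant r a d C0 s \<le> sqrt (1 - y)" unfolding A_eq y_def using Sb by simp
      also have "\<dots> \<le> 1 - y/2"
      proof (rule real_le_lsqrt)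
        have "\<kappa> * T^2 \<le> 1"
        proof -
          have "T \<noteq> 0" using T0 by simp
          from \<kappa>b[OF this] have "0 \<le> 1 - \<kappa> * min (T^2) 1" using norm_ge_zero order_trans by blast
          moreover have "min (T^2) 1 = T^2" using T0 T1 by (simp add: power_le_one)
          ultimately show ?thesis by simp
        qed
        then show "0 \<le> 1 - y/2" unfolding y_def by simp
        show "1 - y \<le> (1 - y/2)^2" by (simp add: power2_eq_square algebra_simps)
      qed
      also have "\<dots> \<le> exp (- (y/2))" using exp_ge_add_one_self[of "-(y/2)"] by simp
      also have "\<dots> \<le> exp (- \<gamma> * \<bar>real_of_int s\<bar> powr (- 2 * \<zeta>))"
      proof -
        have sp: "real_of_int s > 0" using s by simp
        have lb: "C * (2 * real_of_int s) powr (-\<zeta>) \<le> min (d (2 * s - 1)) (d (2 * s))"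
        proof -
          have "C * (2 * real_of_int s) powr (-\<zeta>) \<le> C * (real_of_int (2 * s - 1)) powr (-\<zeta>)"
            using C_pos \<zeta>0 s by (intro mult_left_mono powr_mono2') auto
          also have "\<dots> \<le> d (2 * s - 1)" using d_lower[of "2 * s - 1"] s by simp
          finally have 1: "C * (2 * real_of_int s) powr (-\<zeta>) \<le> d (2 * s - 1)" .
          have 2: "C * (2 * real_of_int s) powr (-\<zeta>) \<le> d (2 * s)" using d_lower[of "2 * s"] s by simp
          show ?thesis using 1 2 by simp
        qed
        have lb0: "0 \<le> C * (2 * real_of_int s) powr (-\<zeta>)" using C_pos by simp
        have "C * (2 * real_of_int s) powr (-\<zeta>) * C0 / M \<le> T"
          unfolding T_def using lb C0 Mp by (intro divide_right_mono mult_right_mono) auto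
        hence "(C * (2 * real_of_int s) powr (-\<zeta>) * C0 / M)^2 \<le> T^2"
          using lb0 C0 Mp by (intro power_mono) auto
        moreover have "(C * (2 * real_of_int s) powr (-\<zeta>) * C0 / M)^2
            = (C*C0/M)^2 * 2 powr (-2*\<zeta>) * \<bar>real_of_int s\<bar> powr (- 2 * \<zeta>)"
        proof -
          have "((2 * real_of_int s) powr (-\<zeta>))^2 = (2 * real_of_int s) powr (-2*\<zeta>)"
            by (simp add: power2_eq_square powr_add[symmetric])
          also have "\<dots> = 2 powr (-2*\<zeta>) * \<bar>real_of_int s\<bar> powr (- 2 * \<zeta>)"
            using sp by (simp add: powr_mult)
          finally show ?thesis by (simp add: power_mult_distrib power_divide)
        qed
        ultimately have "(C*C0/M)^2 * 2 powr (-2*\<zeta>) * \<bar>real_of_int s\<bar> powr (- 2 * \<zeta>) \<le> T^2" by simp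
        hence "\<gamma> * \<bar>real_of_int s\<bar> powr (- 2 * \<zeta>) \<le> y/2"
          unfolding \<gamma>_def y_def using \<kappa>0 by (simp add: mult_left_mono)
        then show ?thesis by simp
      qed
      finally show "A_quant r a d C0 s \<le> exp (- \<gamma> * \<bar>real_of_int s\<bar> powr (- 2 * \<zeta>))" .
    qed
  qed
qed

end
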